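(* Let $(M,d)$ be a complete geodesic space and $f:M\to\mathbb R$ a function. (1) If $f$ is geodesically $\beta$-expconcave for some $\beta>0$, then $f$ is geodesically convex. (2) If $f$ is geodesically $\alpha$-convex and $L$-Lipschitz for some $\alpha,L>0$, then $f$ is geodesically $\beta$-expconcave for every $0<\beta\le \alpha/L^2$.
   Context: A geodesic in a metric space $(M,d)$ is a path $\gamma:[0,1]\to M$ with $d(\gamma(s),\gamma(t))=|t-s|\,d(\gamma(0),\gamma(1))$ for all $s,t\in[0,1]$. $(M,d)$ is a geodesic space if any two points $x,y\in M$ are connected by a geodesic ($\gamma(0)=x,\gamma(1)=y$). For $\alpha\in\mathbb R$, $f:M\to\mathbb R$ is geodesically $\alpha$-convex if for every geodesic $\gamma:[0,1]\to M$ the function $t\in[0,1]\mapsto f(\gamma(t))-\frac{\alpha}{2}d^2(\gamma(0),\gamma(t))$ is convex; $f$ is geodesically convex if it is geodesically $0$-convex, and geodesically concave if $-f$ is geodesically convex. For $\beta>0$, $f$ is geodesically $\beta$-expconcave if $\exp(-\beta f)$ is geodesically concave. *)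

theory Defs
  imports "HOL-Analysis.Analysis"
begin

definition geodesic :: "(real \<Rightarrow> 'a::metric_space) \<Rightarrow> bool" where
  "geodesic \<gamma> \<longleftrightarrow>
     (\<forall>s\<in>{0..1}. \<forall>t\<in>{0..1}. dist (\<gamma> s) (\<gamma> t) = \<bar>t - s\<bar> * dist (\<gamma> 0) (\<gamma> 1))"

definition geodesic_space :: "'a::metric_space itself \<Rightarrow> bool" where
  "geodesic_space _ \<longleftrightarrow>
     (\<forall>x y :: 'a. \<exists>\<gamma>. geodesic \<gamma> \<and> \<gamma> 0 = x \<and> \<gamma> 1 = y)"

definition geod_alpha_convex :: "real \<Rightarrow> ('a::metric_space \<Rightarrow> real) \<Rightarrow> bool" where
  "geod_alpha_convex \<alpha> f \<longleftrightarrow>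
     (\<forall>\<gamma>. geodesic \<gamma> \<longrightarrow>
        convex_on {0..1} (\<lambda>t. f (\<gamma> t) - \<alpha> / 2 * (dist (\<gamma> 0) (\<gamma> t))\<^sup>2))"

definition geod_convex :: "('a::metric_space \<Rightarrow> real) \<Rightarrow> bool" where
  "geod_convex f \<longleftrightarrow> geod_alpha_convex 0 f"

definition geod_concave :: "('a::metric_space \<Rightarrow> real) \<Rightarrow> bool" where
  "geod_concave f \<longleftrightarrow> geod_convex (\<lambda>x. - f x)"

definition geod_expconcave :: "real \<Rightarrow> ('a::metric_space \<Rightarrow> real) \<Rightarrow> bool" where
  "geod_expconcave \<beta> f \<longleftrightarrow> geod_concave (\<lambda>x. exp (- \<beta> * f x))"

end

theory Submission
  imports Defs
begin

lemma E1: fixes u :: real assumes "0 \<le> u" shows "exp (-u) \<le> 1 - u + u\<^sup>2/2"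
proof -
  have "(\<lambda>x. exp x * (1 - x + x\<^sup>2/2)) 0 \<le> (\<lambda>x. exp x * (1 - x + x\<^sup>2/2)) u"
  proof (rule DERIV_nonneg_imp_nondecreasing[OF assms])
    fix x :: real assume "0 \<le> x" "x \<le> u"
    show "\<exists>y. DERIV (\<lambda>x. exp x * (1 - x + x\<^sup>2/2)) x :> y \<and> y \<ge> 0"
    proof (rule exI[of _ "exp x * (x\<^sup>2/2)"], intro conjI)
      show "DERIV (\<lambda>x. exp x * (1 - x + x\<^sup>2/2)) x :> exp x * (x\<^sup>2/2)"
        by (auto intro!: derivative_eq_intros simp: algebra_simps power2_eq_square)
    qed simp
  qed
  hence "1 \<le> exp u * (1 - u + u\<^sup>2/2)" by simp
  thus ?thesis by (simp add: exp_minus field_simps)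
qed

lemma E2: fixes m :: real assumes "0 \<le> m" shows "m - m\<^sup>2/2 \<le> ln (1 + m)"
proof -
  have "(\<lambda>x. ln (1+x) - x + x\<^sup>2/2) 0 \<le> (\<lambda>x. ln (1+x) - x + x\<^sup>2/2) m"
  proof (rule DERIV_nonneg_imp_nondecreasing[OF assms])
    fix x :: real assume x: "0 \<le> x" "x \<le> m"
    show "\<exists>y. DERIV (\<lambda>x. ln (1+x) - x + x\<^sup>2/2) x :> y \<and> y \<ge> 0"
      by (rule exI[of _ "x\<^sup>2/(1+x)"], intro conjI)
         (use x in \<open>auto intro!: derivative_eq_intros simp: field_simps power2_eq_square\<close>)
  qed
  thus ?thesis by simp
qed

lemma H: fixes u v :: real assumes "0 \<le> u" "0 \<le> v"
  shows "v * exp (-u) + u * exp (v * (1 - (u+v)/2)) \<le> u + v"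
proof (cases "u \<le> 2")
  case True
  define m where "m = v * (1 - u/2)"
  have m0: "0 \<le> m" using True assms by (simp add: m_def)
  have mv: "m \<le> v" using assms by (simp add: m_def algebra_simps)
  have "m\<^sup>2 \<le> v\<^sup>2" using m0 mv by (simp add: power_mono)
  hence "v * (1 - (u+v)/2) \<le> m - m\<^sup>2/2" by (simp add: m_def algebra_simps power2_eq_square)
  also have "\<dots> \<le> ln (1+m)" by (rule E2[OF m0])
  finally have "exp (v * (1 - (u+v)/2)) \<le> 1 + m"
    using m0 by (metis exp_le_cancel_iff exp_ln add_pos_nonneg zero_less_one)
  hence a: "u * exp (v * (1 - (u+v)/2)) \<le> u + u * m" using assms(1)
    by (metis distrib_left mult.right_neutral mult_left_mono)
  have b: "v * exp (-u) \<le> v * (1 - u + u\<^sup>2/2)" using E1[OF assms(1)] assms(2) by (rule mult_left_mono)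
  have "u * m + v * (1 - u + u\<^sup>2/2) = v" by (simp add: m_def algebra_simps power2_eq_square)
  thus ?thesis using a b by linarith
next
  case False
  have "v * (1 - (u+v)/2) \<le> 0" using False assms by (simp add: mult_nonneg_nonpos)
  hence "exp (v * (1 - (u+v)/2)) \<le> 1" by simp
  hence "u * exp (v * (1 - (u+v)/2)) \<le> u" using assms(1) by (simp add: mult_left_le)
  moreover have "v * exp (-u) \<le> v" using assms by (simp add: mult_left_le)
  ultimately show ?thesis by linarith
qed
lemma key3: fixes L1 L2 a b :: real
  assumes L: "0 < L1" "0 < L2" and ab: "\<bar>a\<bar> \<le> L1" "\<bar>b\<bar> \<le> L2"
    and c: "L1 * L2 * (L1 + L2) / 2 \<le> L2 * a + L1 * b"
  shows "L2 * exp (-a) + L1 * exp (-b) \<le> L1 + L2"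
proof -
  define s where "s = (L1 + L2) / 2"
  define y where "y = b / L2"
  have b: "b = L2 * y" using L by (simp add: y_def)
  have "L2 * (L1 * s) \<le> L2 * (a + L1 * y)" using c by (simp add: s_def b algebra_simps)
  hence "L1 * s \<le> a + L1 * y" using L(2) by (simp only: mult_le_cancel_left_pos)
  hence ha: "L1 * (s - y) \<le> a" by (simp add: algebra_simps)
  hence "L1 * (s - y) \<le> L1 * 1" using ab by linarith
  hence hy1: "s - 1 \<le> y" using L by simp
  have hy2: "y \<le> 1" using ab L by (simp add: y_def abs_le_iff)
  define \<Phi> where "\<Phi> = (\<lambda>y. L2 * exp (L1 * (y - s)) + L1 * exp (- (L2 * y)))"
  have "L2 * exp (-a) \<le> L2 * exp (L1 * (y - s))" using ha L by (simp add: algebra_simps)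
  hence step1: "L2 * exp (-a) + L1 * exp (-b) \<le> \<Phi> y" by (simp add: \<Phi>_def b)
  have Pp: "\<Phi> (s - 1) \<le> L1 + L2"
  proof -
    have "\<Phi> (s - 1) = L2 * exp (- L1) + L1 * exp (L2 * (1 - (L1 + L2)/2))"
      by (simp add: \<Phi>_def s_def algebra_simps)
    also have "\<dots> \<le> L1 + L2" using H[of L1 L2] L by simp
    finally show ?thesis .
  qed
  have Pq: "\<Phi> 1 \<le> L1 + L2"
  proof -
    have "\<Phi> 1 = L1 * exp (- L2) + L2 * exp (L1 * (1 - (L2 + L1)/2))"
      by (simp add: \<Phi>_def s_def algebra_simps)
    also have "\<dots> \<le> L1 + L2" using H[of L2 L1] L by simp
    finally show ?thesis .
  qed
  show ?thesis
  proof (cases "s - 1 = 1")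
    case True
    hence "y = 1" using hy1 hy2 by simp
    thus ?thesis using step1 Pq by simp
  next
    case False
    hence pq: "s - 1 < 1" using hy1 hy2 by simp
    define l where "l = (y - (s - 1)) / (1 - (s - 1))"
    have l0: "0 \<le> l" "l \<le> 1" using pq hy1 hy2 by (auto simp: l_def field_simps)
    have "l * (1 - (s - 1)) = y - (s - 1)" using pq by (simp add: l_def)
    hence yl: "y = (1 - l) * (s - 1) + l * 1" by (simp add: algebra_simps)
    have e1: "exp (L1 * (y - s)) \<le> (1 - l) * exp (L1 * ((s - 1) - s)) + l * exp (L1 * (1 - s))"
    proof -
      have eq: "L1 * (y - s) = (1 - l) *\<^sub>R (L1 * ((s - 1) - s)) + l *\<^sub>R (L1 * (1 - s))"
        by (simp add: yl algebra_simps)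
      show ?thesis unfolding eq using l0 by (intro convex_onD[OF exp_convex]) auto
    qed
    have e2: "exp (- (L2 * y)) \<le> (1 - l) * exp (- (L2 * (s - 1))) + l * exp (- (L2 * 1))"
    proof -
      have eq: "- (L2 * y) = (1 - l) *\<^sub>R (- (L2 * (s - 1))) + l *\<^sub>R (- (L2 * 1))"
        by (simp add: yl algebra_simps)
      show ?thesis unfolding eq using l0 by (intro convex_onD[OF exp_convex]) auto
    qed
    have "\<Phi> y \<le> (1 - l) * \<Phi> (s - 1) + l * \<Phi> 1"
      using mult_left_mono[OF e1, of L2] mult_left_mono[OF e2, of L1] L
      by (simp add: \<Phi>_def algebra_simps)
    also have "\<dots> \<le> (1 - l) * (L1 + L2) + l * (L1 + L2)"
      using l0 Pp Pq by (intro add_mono mult_left_mono) auto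
    finally show ?thesis using step1 by (simp add: algebra_simps)
  qed
qed

lemma core: fixes h :: "real \<Rightarrow> real" and x y t z c K \<beta> :: real
  assumes xy: "x < y" and t: "0 < t" "t < 1" and z: "z = (1 - t) * x + t * y"
    and conv: "h z - c/2 * z\<^sup>2 \<le> (1 - t) * (h x - c/2 * x\<^sup>2) + t * (h y - c/2 * y\<^sup>2)"
    and lA: "\<bar>h x - h z\<bar> \<le> K * (z - x)" and lB: "\<bar>h y - h z\<bar> \<le> K * (y - z)"
    and K: "0 \<le> K" and \<beta>: "0 < \<beta>" and bc: "\<beta> * K\<^sup>2 \<le> c"
  shows "(1 - t) * exp (- \<beta> * h x) + t * exp (- \<beta> * h y) \<le> exp (- \<beta> * h z)"
proof (cases "K = 0")
  case True
  then show ?thesis using lA lB by (simp add: algebra_simps)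
next
  case False
  hence K0: "0 < K" using K by simp
  define k where "k = \<beta> * K"
  have k0: "0 < k" using K0 \<beta> by (simp add: k_def)
  define A where "A = h x - h z"
  define B where "B = h y - h z"
  define d where "d = y - x"
  have d0: "0 < d" using xy by (simp add: d_def)
  have l1: "z - x = t * d" by (simp add: z d_def algebra_simps)
  have l2: "y - z = (1 - t) * d" by (simp add: z d_def algebra_simps)
  have iden: "(1 - t) * x\<^sup>2 + t * y\<^sup>2 - z\<^sup>2 = t * (1 - t) * d\<^sup>2"
    by (simp add: z d_def power2_eq_square algebra_simps)
  have "c/2 * ((1 - t) * x\<^sup>2 + t * y\<^sup>2 - z\<^sup>2) \<le> (1 - t) * A + t * B"
    using conv unfolding A_def B_def by (simp add: field_simps)
  hence cA: "c/2 * (t * (1 - t) * d\<^sup>2) \<le> (1 - t) * A + t * B" unfolding iden .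
  have tt: "0 \<le> t * (1 - t) * d\<^sup>2" using t by simp
  have "k\<^sup>2 * (t * (1 - t) * d\<^sup>2) \<le> \<beta> * c * (t * (1 - t) * d\<^sup>2)"
  proof (rule mult_right_mono[OF _ tt])
    show "k\<^sup>2 \<le> \<beta> * c" using mult_left_mono[OF bc, of \<beta>] \<beta>
      by (simp add: k_def power2_eq_square algebra_simps)
  qed
  also have "\<dots> \<le> \<beta> * 2 * ((1 - t) * A + t * B)"
    using mult_left_mono[OF cA, of "2*\<beta>"] \<beta> by (simp add: algebra_simps)
  finally have c2: "k\<^sup>2 * (t * (1 - t) * d\<^sup>2) \<le> \<beta> * 2 * ((1 - t) * A + t * B)" .
  define L1 where "L1 = k * (t * d)"
  define L2 where "L2 = k * ((1 - t) * d)"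
  have L1: "0 < L1" using k0 t d0 by (simp add: L1_def)
  have L2: "0 < L2" using k0 t d0 by (simp add: L2_def)
  have a: "\<bar>\<beta> * A\<bar> \<le> L1"
  proof -
    have "\<bar>\<beta> * A\<bar> = \<beta> * \<bar>A\<bar>" using \<beta> by (simp add: abs_mult)
    also have "\<dots> \<le> \<beta> * (K * (t * d))" using lA l1 \<beta> by (simp add: A_def)
    finally show ?thesis by (simp add: L1_def k_def)
  qed
  have b: "\<bar>\<beta> * B\<bar> \<le> L2"
  proof -
    have "\<bar>\<beta> * B\<bar> = \<beta> * \<bar>B\<bar>" using \<beta> by (simp add: abs_mult)
    also have "\<dots> \<le> \<beta> * (K * ((1 - t) * d))" using lB l2 \<beta> by (simp add: B_def)
    finally show ?thesis by (simp add: L2_def k_def)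
  qed
  have cc: "L1 * L2 * (L1 + L2) / 2 \<le> L2 * (\<beta> * A) + L1 * (\<beta> * B)"
  proof -
    have e1: "L1 * L2 * (L1 + L2) / 2 = (k * d / 2) * (k\<^sup>2 * (t * (1 - t) * d\<^sup>2))"
      unfolding L1_def L2_def power2_eq_square by algebra
    have e2: "L2 * (\<beta> * A) + L1 * (\<beta> * B) = (k * d / 2) * (\<beta> * 2 * ((1 - t) * A + t * B))"
      by (simp add: L1_def L2_def algebra_simps)
    have "0 \<le> k * d / 2" using k0 d0 by simp
    thus ?thesis unfolding e1 e2 by (rule mult_left_mono[OF c2])
  qed
  have m: "L2 * exp (- (\<beta> * A)) + L1 * exp (- (\<beta> * B)) \<le> L1 + L2"
    by (rule key3[OF L1 L2 a b cc])
  have m2: "(k * d) * ((1 - t) * exp (- (\<beta> * A)) + t * exp (- (\<beta> * B))) \<le> (k * d) * 1"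
    using m by (simp add: L1_def L2_def algebra_simps)
  hence m3: "(1 - t) * exp (- (\<beta> * A)) + t * exp (- (\<beta> * B)) \<le> 1"
    using k0 d0 by (simp only: mult_le_cancel_left_pos mult_pos_pos)
  have ex: "exp (- \<beta> * h x) = exp (- (\<beta> * A)) * exp (- \<beta> * h z)"
    "exp (- \<beta> * h y) = exp (- (\<beta> * B)) * exp (- \<beta> * h z)"
    by (simp_all add: A_def B_def flip: exp_add) (simp_all add: algebra_simps)
  have "(1 - t) * exp (- \<beta> * h x) + t * exp (- \<beta> * h y)
      = ((1 - t) * exp (- (\<beta> * A)) + t * exp (- (\<beta> * B))) * exp (- \<beta> * h z)"
    unfolding ex by (simp add: algebra_simps)
  also have "\<dots> \<le> 1 * exp (- \<beta> * h z)" using m3 by (rule mult_right_mono) simp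
  finally show ?thesis by simp
qed


lemma convex_on_eq_on:
  assumes "convex_on S f" "\<And>x. x \<in> S \<Longrightarrow> f x = g x"
  shows "convex_on S g"
  unfolding convex_on_def
proof (intro conjI ballI allI impI)
  show "convex S" using assms(1) by (simp add: convex_on_def)
  fix x y u v assume xy: "x \<in> S" "y \<in> S" and uv: "0 \<le> (u::real)" "0 \<le> v" "u + v = 1"
  have "u *\<^sub>R x + v *\<^sub>R y \<in> S" using \<open>convex S\<close> xy uv by (rule convexD)
  thus "g (u *\<^sub>R x + v *\<^sub>R y) \<le> u * g x + v * g y"
    using assms xy uv unfolding convex_on_def by (metis assms(2))
qed

lemma part1:
  fixes f :: "'a::metric_space \<Rightarrow> real"
  assumes b: "\<beta> > 0" and e: "geod_expconcave \<beta> f"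
  shows "geod_convex f"
  unfolding geod_convex_def geod_alpha_convex_def
proof (intro allI impI)
  fix \<gamma> :: "real \<Rightarrow> 'a" assume g: "geodesic \<gamma>"
  have cv: "convex_on {0..1} (\<lambda>t. - exp (- \<beta> * f (\<gamma> t)))"
    using e g unfolding geod_expconcave_def geod_concave_def geod_convex_def geod_alpha_convex_def
    by auto
  have "convex_on {0..1} (\<lambda>t. f (\<gamma> t))"
  proof (rule convex_onI)
    fix t x y :: real assume t: "0 < t" "t < 1" and xy: "x \<in> {0..1}" "y \<in> {0..1}"
    define z where "z = (1 - t) *\<^sub>R x + t *\<^sub>R y"
    have "- exp (- \<beta> * f (\<gamma> z)) \<le> (1 - t) * - exp (- \<beta> * f (\<gamma> x)) + t * - exp (- \<beta> * f (\<gamma> y))"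
      unfolding z_def using convex_onD[OF cv, of t x y] t xy by simp
    hence c1: "(1 - t) * exp (- \<beta> * f (\<gamma> x)) + t * exp (- \<beta> * f (\<gamma> y)) \<le> exp (- \<beta> * f (\<gamma> z))"
      by (simp add: algebra_simps)
    have c2: "exp ((1 - t) *\<^sub>R (- \<beta> * f (\<gamma> x)) + t *\<^sub>R (- \<beta> * f (\<gamma> y)))
        \<le> (1 - t) * exp (- \<beta> * f (\<gamma> x)) + t * exp (- \<beta> * f (\<gamma> y))"
      using t by (intro convex_onD[OF exp_convex]) auto
    have "(1 - t) *\<^sub>R (- \<beta> * f (\<gamma> x)) + t *\<^sub>R (- \<beta> * f (\<gamma> y)) \<le> - \<beta> * f (\<gamma> z)"
      using order_trans[OF c2 c1] by simp
    hence "\<beta> * f (\<gamma> z) \<le> \<beta> * ((1 - t) * f (\<gamma> x) + t * f (\<gamma> y))"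
      by (simp add: algebra_simps)
    thus "f (\<gamma> ((1 - t) *\<^sub>R x + t *\<^sub>R y)) \<le> (1 - t) * f (\<gamma> x) + t * f (\<gamma> y)"
      using b by (simp add: z_def)
  qed (simp add: convex_real_interval)
  thus "convex_on {0..1} (\<lambda>t. f (\<gamma> t) - 0 / 2 * (dist (\<gamma> 0) (\<gamma> t))\<^sup>2)" by simp
qed

lemma part2:
  fixes f :: "'a::metric_space \<Rightarrow> real"
  assumes a: "\<alpha> > 0" and L: "L > 0" and ac: "geod_alpha_convex \<alpha> f" and lip: "L-lipschitz_on UNIV f"
    and b: "0 < \<beta>" "\<beta> \<le> \<alpha> / L\<^sup>2"
  shows "geod_expconcave \<beta> f"
  unfolding geod_expconcave_def geod_concave_def geod_convex_def geod_alpha_convex_def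
proof (intro allI impI)
  fix \<gamma> :: "real \<Rightarrow> 'a" assume g: "geodesic \<gamma>"
  define D where "D = dist (\<gamma> 0) (\<gamma> 1)"
  define h where "h = (\<lambda>t. f (\<gamma> t))"
  have D0: "0 \<le> D" by (simp add: D_def)
  have gd: "dist (\<gamma> s) (\<gamma> t) = \<bar>t - s\<bar> * D" if "s \<in> {0..1}" "t \<in> {0..1}" for s t
    using g that unfolding geodesic_def D_def by blast
  have cv0: "convex_on {0..1} (\<lambda>t. h t - \<alpha> / 2 * (dist (\<gamma> 0) (\<gamma> t))\<^sup>2)"
    using ac g unfolding geod_alpha_convex_def h_def by blast
  have cv: "convex_on {0..1} (\<lambda>t. h t - (\<alpha> * D\<^sup>2) / 2 * t\<^sup>2)"
    by (rule convex_on_eq_on[OF cv0]) (auto simp: gd power_mult_distrib)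
  have hl: "\<bar>h s - h t\<bar> \<le> (L * D) * \<bar>t - s\<bar>" if "s \<in> {0..1}" "t \<in> {0..1}" for s t
    using lipschitz_onD[OF lip, of "\<gamma> s" "\<gamma> t"] gd[OF that] by (simp add: h_def dist_real_def mult.assoc mult.commute mult.left_commute)
  have bc: "\<beta> * (L * D)\<^sup>2 \<le> \<alpha> * D\<^sup>2"
  proof -
    have "\<beta> * L\<^sup>2 \<le> \<alpha>" using b L by (simp add: field_simps)
    hence "(\<beta> * L\<^sup>2) * D\<^sup>2 \<le> \<alpha> * D\<^sup>2" by (rule mult_right_mono) simp
    thus ?thesis by (simp add: power_mult_distrib algebra_simps)
  qed
  have "convex_on {0..1} (\<lambda>t. - exp (- \<beta> * h t))"
  proof (rule convex_on_linorderI)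
    fix t x y :: real assume t: "0 < t" "t < 1" and xy: "x \<in> {0..1}" "y \<in> {0..1}" "x < y"
    define z where "z = (1 - t) * x + t * y"
    have zr: "(1 - t) *\<^sub>R x + t *\<^sub>R y = z" by (simp add: z_def)
    have "0 \<le> t * (y - x)" "0 \<le> (1 - t) * (y - x)" using xy t by simp_all
    hence xz: "x \<le> z" "z \<le> y" by (simp_all add: z_def algebra_simps)
    have z01: "z \<in> {0..1}" using xz xy by auto
    have conv: "h z - (\<alpha> * D\<^sup>2)/2 * z\<^sup>2 \<le> (1 - t) * (h x - (\<alpha> * D\<^sup>2)/2 * x\<^sup>2) + t * (h y - (\<alpha> * D\<^sup>2)/2 * y\<^sup>2)"
      using convex_onD[OF cv, of t x y] t xy by (simp add: z_def)
    have lA: "\<bar>h x - h z\<bar> \<le> (L * D) * (z - x)" using hl[OF xy(1) z01] xz by simp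
    have lB: "\<bar>h y - h z\<bar> \<le> (L * D) * (y - z)" using hl[OF xy(2) z01] xz by (simp add: abs_minus_commute)
    have "(1 - t) * exp (- \<beta> * h x) + t * exp (- \<beta> * h y) \<le> exp (- \<beta> * h z)"
      by (rule core[OF xy(3) t z_def conv lA lB _ b(1) bc]) (use L D0 in simp)
    thus "- exp (- \<beta> * h ((1 - t) *\<^sub>R x + t *\<^sub>R y)) \<le> (1 - t) * - exp (- \<beta> * h x) + t * - exp (- \<beta> * h y)"
      unfolding zr by simp
  qed (simp add: convex_real_interval)
  thus "convex_on {0..1} (\<lambda>t. - exp (- \<beta> * f (\<gamma> t)) - 0 / 2 * (dist (\<gamma> 0) (\<gamma> t))\<^sup>2)"
    by (simp add: h_def)
qed

theorem lemma1:
  fixes f :: "'a::{metric_space, complete_space} \<Rightarrow> real"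
  assumes "geodesic_space TYPE('a)"
  shows "(\<forall>\<beta>>0. geod_expconcave \<beta> f \<longrightarrow> geod_convex f)
    \<and> (\<forall>\<alpha> L. \<alpha> > 0 \<and> L > 0 \<and> geod_alpha_convex \<alpha> f \<and> L-lipschitz_on UNIV f \<longrightarrow>
          (\<forall>\<beta>. 0 < \<beta> \<and> \<beta> \<le> \<alpha> / L\<^sup>2 \<longrightarrow> geod_expconcave \<beta> f))"
  using part1[of _ f] part2[of _ _ f] by blast

end
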